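(* Let $E$ be a finite-dimensional real affine space. An extended-real-valued function $h:E\to\overline{\mathbb{R}}$ is generalized affine if and only if one of the following holds: (a) $h(x)=+\infty$ for all $x\in E$; (b) $h(x)=-\infty$ for all $x\in E$; (c) $h$ is real-valued on all of $E$ and is an affine function; or (d) there is a hyperplane $H$ in $E$ such that $h(x)=+\infty$ for all points on one (open) side of $H$, $h(x)=-\infty$ for all points on the other side of $H$, and the restriction of $h$ to $H$ is a generalized affine function on $H$.
   Context: $\overline{\mathbb{R}}=\mathbb{R}\cup\{-\infty,+\infty\}$. A generalized affine function on an affine space is an extended-real-valued function that is both convex and concave in the sense of extended-real-valued convex analysis (convex: epigraph convex; concave: hypograph convex). *)

theory Defs
  imports "HOL-Analysis.Analysis" "HOL-Library.Extended_Real"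
begin

definition epi_on :: "'a set \<Rightarrow> ('a \<Rightarrow> ereal) \<Rightarrow> ('a \<times> real) set" where
  "epi_on A h = {(x, t). x \<in> A \<and> h x \<le> ereal t}"

definition hypo_on :: "'a set \<Rightarrow> ('a \<Rightarrow> ereal) \<Rightarrow> ('a \<times> real) set" where
  "hypo_on A h = {(x, t). x \<in> A \<and> ereal t \<le> h x}"

definition gen_affine_on :: "'a::real_vector set \<Rightarrow> ('a \<Rightarrow> ereal) \<Rightarrow> bool" where
  "gen_affine_on A h \<longleftrightarrow> affine A \<and> convex (epi_on A h) \<and> convex (hypo_on A h)"

definition affine_fun :: "('a::real_vector \<Rightarrow> real) \<Rightarrow> bool" where
  "affine_fun f \<longleftrightarrow> (\<exists>l c. linear l \<and> (\<forall>x. f x = l x + c))"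

end

theory Submission
  imports Defs
begin


lemma epiD:
  assumes "convex (epi_on UNIV h)" "0\<le>u" "0\<le>v" "u+v=1" "h x \<le> ereal s" "h y \<le> ereal t"
  shows "h (u *\<^sub>R x + v *\<^sub>R y) \<le> ereal (u * s + v * t)"
proof -
  have "(x,s) \<in> epi_on UNIV h" "(y,t) \<in> epi_on UNIV h" using assms by (auto simp: epi_on_def)
  from convexD[OF assms(1) this assms(2-4)] show ?thesis by (simp add: epi_on_def)
qed

lemma hypoD:
  assumes "convex (hypo_on UNIV h)" "0\<le>u" "0\<le>v" "u+v=1" "ereal s \<le> h x" "ereal t \<le> h y"
  shows "ereal (u * s + v * t) \<le> h (u *\<^sub>R x + v *\<^sub>R y)"
proof -
  have "(x,s) \<in> hypo_on UNIV h" "(y,t) \<in> hypo_on UNIV h" using assms by (auto simp: hypo_on_def)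
  from convexD[OF assms(1) this assms(2-4)] show ?thesis by (simp add: hypo_on_def)
qed

lemma epi_minf:
  assumes "convex (epi_on UNIV h)" "0<u" "u\<le>1" "h x = -\<infinity>" "h y < \<infinity>"
  shows "h (u *\<^sub>R x + (1-u) *\<^sub>R y) = -\<infinity>"
proof -
  obtain t where t: "h y \<le> ereal t" using assms(5)
    by (cases "h y") auto
  have all: "h (u *\<^sub>R x + (1-u) *\<^sub>R y) \<le> ereal (u * s + (1 - u) * t)" for s
    using epiD[OF assms(1), of u "1-u" x s y t] assms t by auto
  show ?thesis
  proof (cases "h (u *\<^sub>R x + (1-u) *\<^sub>R y)")
    case (real r)
    have "u * ((r - 1 - (1-u)*t)/u) = r - 1 - (1-u)*t" using assms(2) by simp
    then have "u * ((r - 1 - (1-u)*t)/u) + (1-u)*t < r" by simp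
    with all[of "(r - 1 - (1-u)*t)/u"] real show ?thesis by simp
  next
    case PInf
    with all[of 0] show ?thesis by simp
  qed simp
qed

lemma hypo_pinf:
  assumes "convex (hypo_on UNIV h)" "0<u" "u\<le>1" "h x = \<infinity>" "h y > -\<infinity>"
  shows "h (u *\<^sub>R x + (1-u) *\<^sub>R y) = \<infinity>"
proof -
  obtain t where t: "ereal t \<le> h y" using assms(5)
    by (cases "h y") auto
  have all: "ereal (u * s + (1 - u) * t) \<le> h (u *\<^sub>R x + (1-u) *\<^sub>R y)" for s
    using hypoD[OF assms(1), of u "1-u" s x t y] assms t by auto
  show ?thesis
  proof (cases "h (u *\<^sub>R x + (1-u) *\<^sub>R y)")
    case (real r)
    have "u * ((r + 1 - (1-u)*t)/u) = r + 1 - (1-u)*t" using assms(2) by simp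
    then have "u * ((r + 1 - (1-u)*t)/u) + (1-u)*t > r" by simp
    with all[of "(r + 1 - (1-u)*t)/u"] real show ?thesis by simp
  next
    case MInf
    with all[of 0] show ?thesis by simp
  qed simp
qed

lemma affine_from_conv:
  fixes f :: "'a::real_vector \<Rightarrow> real"
  assumes A: "\<And>x y u. 0 \<le> u \<Longrightarrow> u \<le> 1 \<Longrightarrow> f (u *\<^sub>R x + (1-u) *\<^sub>R y) = u * f x + (1-u) * f y"
  shows "affine_fun f"
proof -
  define l where "l x = f x - f 0" for x
  have l0: "l 0 = 0" by (simp add: l_def)
  have lc: "l (u *\<^sub>R x + (1-u) *\<^sub>R y) = u * l x + (1-u) * l y" if "0 \<le> u" "u \<le> 1" for x y u
    using A[OF that, of x y] by (simp add: l_def algebra_simps)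
  have h1: "l (c *\<^sub>R x) = c * l x" if "0 \<le> c" "c \<le> 1" for c x
    using lc[OF that, of x 0] l0 by simp
  have h2: "l (c *\<^sub>R x) = c * l x" if "0 \<le> c" for c x
  proof (cases "c \<le> 1")
    case True then show ?thesis using h1 that by simp
  next
    case False
    then have "l x = l ((1/c) *\<^sub>R (c *\<^sub>R x))" by simp
    also have "\<dots> = (1/c) * l (c *\<^sub>R x)" using h1[of "1/c" "c *\<^sub>R x"] False by simp
    finally show ?thesis using False by (simp add: field_simps)
  qed
  have neg: "l (- x) = - l x" for x
    using lc[of "1/2" x "-x"] l0 by simp
  have hom: "l (c *\<^sub>R x) = c * l x" for c x
  proof (cases "0 \<le> c")
    case True then show ?thesis using h2 by simp
  next
    case False
    have "l (c *\<^sub>R x) = l (- ((-c) *\<^sub>R x))" by simp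
    also have "\<dots> = - ((-c) * l x)" using neg h2[of "-c" x] False by simp
    finally show ?thesis by simp
  qed
  have add: "l (x + y) = l x + l y" for x y
  proof -
    have "l (x + y) = 2 * l ((1/2) *\<^sub>R x + (1 - 1/2) *\<^sub>R y)"
      using hom[of 2 "(1/2) *\<^sub>R x + (1 - 1/2) *\<^sub>R y"] by (simp add: scaleR_add_right)
    also have "\<dots> = l x + l y" using lc[of "1/2" x y] by simp
    finally show ?thesis .
  qed
  have "linear l" by (rule linearI) (simp_all add: add hom)
  moreover have "\<forall>x. f x = l x + f 0" by (simp add: l_def)
  ultimately show ?thesis unfolding affine_fun_def by blast
qed

lemma convex_epiI:
  assumes "\<And>x y s t u. 0 \<le> u \<Longrightarrow> u \<le> 1 \<Longrightarrow> h x \<le> ereal s \<Longrightarrow> h y \<le> ereal t \<Longrightarrow>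
     h (u *\<^sub>R x + (1-u) *\<^sub>R y) \<le> ereal (u * s + (1 - u) * t)"
  shows "convex (epi_on UNIV h)"
  unfolding convex_def
proof (clarify)
  fix x s y t and u v :: real
  assume "(x,s) \<in> epi_on UNIV h" "(y,t) \<in> epi_on UNIV h" "0 \<le> u" "0 \<le> v" "u + v = 1"
  then show "u *\<^sub>R (x,s) + v *\<^sub>R (y,t) \<in> epi_on UNIV h"
    using assms[of u x s y t] by (auto simp: epi_on_def dest!: sym[of "u+v"] simp: eq_diff_eq[symmetric])
qed

lemma convex_hypoI:
  assumes "\<And>x y s t u. 0 \<le> u \<Longrightarrow> u \<le> 1 \<Longrightarrow> ereal s \<le> h x \<Longrightarrow> ereal t \<le> h y \<Longrightarrow>
     ereal (u * s + (1 - u) * t) \<le> h (u *\<^sub>R x + (1-u) *\<^sub>R y)"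
  shows "convex (hypo_on UNIV h)"
  unfolding convex_def
proof (clarify)
  fix x s y t and u v :: real
  assume "(x,s) \<in> hypo_on UNIV h" "(y,t) \<in> hypo_on UNIV h" "0 \<le> u" "0 \<le> v" "u + v = 1"
  then show "u *\<^sub>R (x,s) + v *\<^sub>R (y,t) \<in> hypo_on UNIV h"
    using assms[of u s x t y] by (auto simp: hypo_on_def dest!: sym[of "u+v"] simp: eq_diff_eq[symmetric])
qed


lemma beyond:
  fixes a p x :: "'a::euclidean_space"
  assumes "a \<bullet> x > b"
  shows "\<exists>u d. 0 < u \<and> u \<le> 1 \<and> x = u *\<^sub>R p + (1-u) *\<^sub>R d \<and> a \<bullet> d > b"
proof -
  define s where "s = (a \<bullet> x - b) / (\<bar>a \<bullet> x - a \<bullet> p\<bar> + 1)"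
  have s0: "s > 0" using assms by (simp add: s_def)
  have sl: "s * \<bar>a \<bullet> x - a \<bullet> p\<bar> < a \<bullet> x - b"
  proof -
    have "s * \<bar>a \<bullet> x - a \<bullet> p\<bar> < s * (\<bar>a \<bullet> x - a \<bullet> p\<bar> + 1)" using s0 by simp
    also have "\<dots> = a \<bullet> x - b" unfolding s_def by (simp add: field_simps add_nonneg_pos)
    finally show ?thesis .
  qed
  define d where "d = x + s *\<^sub>R (x - p)"
  define u where "u = s / (1 + s)"
  have ad: "a \<bullet> d = a \<bullet> x + s * (a \<bullet> x - a \<bullet> p)"
    by (simp add: d_def inner_add_right inner_diff_right)
  have "- (s * \<bar>a \<bullet> x - a \<bullet> p\<bar>) \<le> s * (a \<bullet> x - a \<bullet> p)"
  proof -
    have "s * (- (a \<bullet> x - a \<bullet> p)) \<le> s * \<bar>a \<bullet> x - a \<bullet> p\<bar>"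
      using s0 by (intro mult_left_mono) auto
    then show ?thesis by (simp add: right_diff_distrib)
  qed
  then have "a \<bullet> d > b" using sl ad by linarith
  moreover have "0 < u" "u \<le> 1" using s0 by (auto simp: u_def)
  moreover have "u *\<^sub>R p + (1-u) *\<^sub>R d = x"
  proof -
    have e1: "1 - u = 1 / (1 + s)" using s0 by (simp add: u_def field_simps)
    have e2: "(1 / (1 + s)) * s = u" by (simp add: u_def)
    have "(1-u) *\<^sub>R d = (1 / (1 + s)) *\<^sub>R x + u *\<^sub>R x - u *\<^sub>R p"
      unfolding e1 d_def scaleR_add_right scaleR_diff_right scaleR_scaleR e2 by simp
    then have "u *\<^sub>R p + (1-u) *\<^sub>R d = (1 / (1 + s) + u) *\<^sub>R x"
      by (simp add: scaleR_add_left)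
    also have "1 / (1 + s) + u = 1" using s0 by (simp add: u_def field_simps)
    finally show ?thesis by simp
  qed
  ultimately show ?thesis by metis
qed


lemma all_le_minf: "(\<And>s. e \<le> ereal s) \<Longrightarrow> e = -\<infinity>"
proof (cases e)
  case (real r)
  assume "\<And>s. e \<le> ereal s" then have "e \<le> ereal (r - 1)" .
  with real show ?thesis by simp
qed auto

lemma all_ge_pinf: "(\<And>s. ereal s \<le> e) \<Longrightarrow> e = \<infinity>"
proof (cases e)
  case (real r)
  assume "\<And>s. ereal s \<le> e" then have "ereal (r + 1) \<le> e" .
  with real show ?thesis by simp
qed auto

lemma forward:
  fixes h :: "'a::euclidean_space \<Rightarrow> ereal"
  assumes G: "gen_affine_on UNIV h"
  shows "((\<forall>x. h x = \<infinity>) \<or>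
     (\<forall>x. h x = -\<infinity>) \<or>
     (\<exists>f. affine_fun f \<and> (\<forall>x. h x = ereal (f x))) \<or>
     (\<exists>a b. a \<noteq> 0 \<and>
        (\<forall>x. a \<bullet> x > b \<longrightarrow> h x = \<infinity>) \<and>
        (\<forall>x. a \<bullet> x < b \<longrightarrow> h x = -\<infinity>) \<and>
        gen_affine_on {x. a \<bullet> x = b} h))"
proof -
  have E: "convex (epi_on UNIV h)" and Hy: "convex (hypo_on UNIV h)"
    using G by (auto simp: gen_affine_on_def)
  define A where "A = {x. h x = -\<infinity>}"
  define B where "B = {x. h x = \<infinity>}"
  have cA: "convex A" unfolding convex_def A_def
  proof (clarify)
    fix x y and u v :: real
    assume "h x = -\<infinity>" "h y = -\<infinity>" "0 \<le> u" "0 \<le> v" "u + v = 1"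
    then have "h (u *\<^sub>R x + v *\<^sub>R y) \<le> ereal (u * s + v * s)" for s
      by (intro epiD[OF E]) auto
    then have "h (u *\<^sub>R x + v *\<^sub>R y) \<le> ereal s" for s
      using \<open>u + v = 1\<close> by (metis distrib_right mult_1)
    then show "h (u *\<^sub>R x + v *\<^sub>R y) = -\<infinity>" by (rule all_le_minf)
  qed
  have cB: "convex B" unfolding convex_def B_def
  proof (clarify)
    fix x y and u v :: real
    assume "h x = \<infinity>" "h y = \<infinity>" "0 \<le> u" "0 \<le> v" "u + v = 1"
    then have "ereal (u * s + v * s) \<le> h (u *\<^sub>R x + v *\<^sub>R y)" for s
      by (intro hypoD[OF Hy]) auto
    then have "ereal s \<le> h (u *\<^sub>R x + v *\<^sub>R y)" for s
      using \<open>u + v = 1\<close> by (metis distrib_right mult_1)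
    then show "h (u *\<^sub>R x + v *\<^sub>R y) = \<infinity>" by (rule all_ge_pinf)
  qed
  have mid: "(1/2) *\<^sub>R q + (1 - 1/2) *\<^sub>R (2 *\<^sub>R c - q) = c" for q c :: 'a
    by (simp add: algebra_simps)
  show ?thesis
  proof (cases "\<forall>x. h x = \<infinity>")
    case nP: False
    show ?thesis
    proof (cases "\<forall>x. h x = -\<infinity>")
      case nM: False
      show ?thesis
      proof (cases "A = {} \<and> B = {}")
        case True
        then have fin: "\<bar>h x\<bar> \<noteq> \<infinity>" for x by (auto simp: A_def B_def)
        define f where "f x = real_of_ereal (h x)" for x
        have hf: "h x = ereal (f x)" for x using fin[of x] by (cases "h x") (auto simp: f_def)
        have "affine_fun f"
        proof (rule affine_from_conv)
          fix x y and u :: real assume u: "0 \<le> u" "u \<le> 1"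
          have "h (u *\<^sub>R x + (1-u) *\<^sub>R y) \<le> ereal (u * f x + (1-u) * f y)"
            using u by (intro epiD[OF E]) (auto simp: hf)
          moreover have "ereal (u * f x + (1-u) * f y) \<le> h (u *\<^sub>R x + (1-u) *\<^sub>R y)"
            using u by (intro hypoD[OF Hy]) (auto simp: hf)
          ultimately show "f (u *\<^sub>R x + (1 - u) *\<^sub>R y) = u * f x + (1 - u) * f y"
            by (simp add: hf)
        qed
        then show ?thesis using hf by blast
      next
        case False
        have Ane: "A \<noteq> {}"
        proof
          assume Ae: "A = {}"
          with False obtain p where p: "h p = \<infinity>" by (auto simp: B_def)
          from nP obtain c where c: "h c \<noteq> \<infinity>" by auto
          with Ae have "h c > -\<infinity>" by (auto simp: A_def)
          from hypo_pinf[OF Hy, of "1/2" p "2 *\<^sub>R c - p"] p this mid[of p c] Ae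
          show False by (auto simp: A_def c)
        qed
        have Bne: "B \<noteq> {}"
        proof
          assume Be: "B = {}"
          with False obtain q where q: "h q = -\<infinity>" by (auto simp: A_def)
          from nM obtain c where c: "h c \<noteq> -\<infinity>" by auto
          with Be have "h c < \<infinity>" by (auto simp: B_def)
          from epi_minf[OF E, of "1/2" q "2 *\<^sub>R c - q"] q this mid[of q c] Be
          show False by (auto simp: B_def c)
        qed
        have "A \<inter> B = {}" by (auto simp: A_def B_def)
        from separating_hyperplane_sets[OF cA cB Ane Bne this]
        obtain a b where a: "a \<noteq> 0" and aA: "\<forall>x\<in>A. a \<bullet> x \<le> b" and aB: "\<forall>x\<in>B. a \<bullet> x \<ge> b"
          by blast
        from Ane obtain q where q: "h q = -\<infinity>" by (auto simp: A_def)
        from Bne obtain p where p: "h p = \<infinity>" by (auto simp: B_def)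
        have up: "\<forall>x. a \<bullet> x > b \<longrightarrow> h x = \<infinity>"
        proof (intro allI impI)
          fix x assume ax: "a \<bullet> x > b"
          show "h x = \<infinity>"
          proof (rule ccontr)
            assume nx: "h x \<noteq> \<infinity>"
            have "h x \<noteq> -\<infinity>" using aA ax by (auto simp: A_def)
            from beyond[OF ax, of p] obtain u d where ud: "0 < u" "u \<le> 1"
              "x = u *\<^sub>R p + (1-u) *\<^sub>R d" "a \<bullet> d > b" by blast
            have "h d = -\<infinity>"
            proof (rule ccontr)
              assume "h d \<noteq> -\<infinity>"
              then have "h d > -\<infinity>" by simp
              from hypo_pinf[OF Hy ud(1,2) p this] ud(3) nx show False by simp
            qed
            then show False using aA ud(4) by (auto simp: A_def)
          qed
        qed
        have dn: "\<forall>x. a \<bullet> x < b \<longrightarrow> h x = -\<infinity>"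
        proof (intro allI impI)
          fix x assume ax0: "a \<bullet> x < b"
          then have ax: "(-a) \<bullet> x > -b" by simp
          show "h x = -\<infinity>"
          proof (rule ccontr)
            assume nx: "h x \<noteq> -\<infinity>"
            have "h x \<noteq> \<infinity>" using aB ax0 by (auto simp: B_def)
            from beyond[OF ax, of q] obtain u d where ud: "0 < u" "u \<le> 1"
              "x = u *\<^sub>R q + (1-u) *\<^sub>R d" "(-a) \<bullet> d > -b" by blast
            have "h d = \<infinity>"
            proof (rule ccontr)
              assume "h d \<noteq> \<infinity>"
              then have "h d < \<infinity>" by (simp add: less_top)
              from epi_minf[OF E ud(1,2) q this] ud(3) nx show False by simp
            qed
            then show False using aB ud(4) by (auto simp: B_def)
          qed
        qed
        have "epi_on {x. a \<bullet> x = b} h = epi_on UNIV h \<inter> ({x. a \<bullet> x = b} \<times> UNIV)"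
          by (auto simp: epi_on_def)
        moreover have "hypo_on {x. a \<bullet> x = b} h = hypo_on UNIV h \<inter> ({x. a \<bullet> x = b} \<times> UNIV)"
          by (auto simp: hypo_on_def)
        ultimately have "gen_affine_on {x. a \<bullet> x = b} h"
          unfolding gen_affine_on_def using E Hy
          by (auto intro!: convex_Int convex_Times convex_hyperplane affine_hyperplane)
        with a up dn show ?thesis by blast
      qed
    qed simp
  qed simp
qed


lemma backward:
  fixes h :: "'a::euclidean_space \<Rightarrow> ereal"
  assumes "((\<forall>x. h x = \<infinity>) \<or>
     (\<forall>x. h x = -\<infinity>) \<or>
     (\<exists>f. affine_fun f \<and> (\<forall>x. h x = ereal (f x))) \<or>
     (\<exists>a b. a \<noteq> 0 \<and>
        (\<forall>x. a \<bullet> x > b \<longrightarrow> h x = \<infinity>) \<and>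
        (\<forall>x. a \<bullet> x < b \<longrightarrow> h x = -\<infinity>) \<and>
        gen_affine_on {x. a \<bullet> x = b} h))"
  shows "gen_affine_on UNIV h"
  using assms
proof (elim disjE exE conjE)
  assume P: "\<forall>x. h x = \<infinity>"
  have "epi_on UNIV h = {}" "hypo_on UNIV h = UNIV" using P by (auto simp: epi_on_def hypo_on_def)
  then show ?thesis by (simp add: gen_affine_on_def)
next
  assume P: "\<forall>x. h x = -\<infinity>"
  have "epi_on UNIV h = UNIV" "hypo_on UNIV h = {}" using P by (auto simp: epi_on_def hypo_on_def)
  then show ?thesis by (simp add: gen_affine_on_def)
next
  fix f assume af: "affine_fun f" and hf: "\<forall>x. h x = ereal (f x)"
  from af obtain l c where l: "linear l" and fl: "\<forall>x. f x = l x + c" by (auto simp: affine_fun_def)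
  have fc: "f (u *\<^sub>R x + (1-u) *\<^sub>R y) = u * f x + (1-u) * f y" for u x y
  proof -
    have "f (u *\<^sub>R x + (1-u) *\<^sub>R y) = u * l x + (1-u) * l y + c"
      using fl by (simp add: linear_add[OF l] linear_scale[OF l])
    then show ?thesis using fl by (simp add: algebra_simps)
  qed
  have "convex (epi_on UNIV h)"
  proof (rule convex_epiI)
    fix x y s t and u :: real
    assume u: "0 \<le> u" "u \<le> 1" "h x \<le> ereal s" "h y \<le> ereal t"
    then have "u * f x \<le> u * s" "(1-u) * f y \<le> (1-u) * t"
      by (auto simp: hf intro!: mult_left_mono)
    then show "h (u *\<^sub>R x + (1-u) *\<^sub>R y) \<le> ereal (u * s + (1 - u) * t)"
      by (simp add: hf fc)
  qed
  moreover have "convex (hypo_on UNIV h)"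
  proof (rule convex_hypoI)
    fix x y s t and u :: real
    assume u: "0 \<le> u" "u \<le> 1" "ereal s \<le> h x" "ereal t \<le> h y"
    then have "u * s \<le> u * f x" "(1-u) * t \<le> (1-u) * f y"
      by (auto simp: hf intro!: mult_left_mono)
    then show "ereal (u * s + (1 - u) * t) \<le> h (u *\<^sub>R x + (1-u) *\<^sub>R y)"
      by (simp add: hf fc)
  qed
  ultimately show ?thesis by (simp add: gen_affine_on_def)
next
  fix a :: 'a and b :: real
  assume a: "a \<noteq> 0" and up: "\<forall>x. a \<bullet> x > b \<longrightarrow> h x = \<infinity>"
    and dn: "\<forall>x. a \<bullet> x < b \<longrightarrow> h x = -\<infinity>" and G: "gen_affine_on {x. a \<bullet> x = b} h"
  have EH: "convex (epi_on {x. a \<bullet> x = b} h)" and HH: "convex (hypo_on {x. a \<bullet> x = b} h)"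
    using G by (auto simp: gen_affine_on_def)
  have comb: "a \<bullet> (u *\<^sub>R x + (1-u) *\<^sub>R y) = u * (a \<bullet> x) + (1-u) * (a \<bullet> y)" for u x y
    by (simp add: inner_add_right)
  have "convex (epi_on UNIV h)"
  proof (rule convex_epiI)
    fix x y s t and u :: real
    assume u: "0 \<le> u" "u \<le> 1" "h x \<le> ereal s" "h y \<le> ereal t"
    have xle: "a \<bullet> x \<le> b" using up u(3) by (metis not_le ereal_infty_less_eq(1) PInfty_neq_ereal(1))
    have yle: "a \<bullet> y \<le> b" using up u(4) by (metis not_le ereal_infty_less_eq(1) PInfty_neq_ereal(1))
    show "h (u *\<^sub>R x + (1-u) *\<^sub>R y) \<le> ereal (u * s + (1 - u) * t)"
    proof (cases "u = 0 \<or> u = 1")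
      case True then show ?thesis using u by auto
    next
      case False
      then have u': "0 < u" "u < 1" using u by auto
      show ?thesis
      proof (cases "a \<bullet> x = b \<and> a \<bullet> y = b")
        case True
        then have "(x,s) \<in> epi_on {x. a \<bullet> x = b} h" "(y,t) \<in> epi_on {x. a \<bullet> x = b} h"
          using u by (auto simp: epi_on_def)
        from convexD[OF EH this, of u "1-u"] u show ?thesis by (simp add: epi_on_def)
      next
        case False
        have "u * (a \<bullet> x) + (1-u) * (a \<bullet> y) < b"
        proof (cases "a \<bullet> x < b")
          case True
          have "u * (a \<bullet> x) < u * b" using True u' by simp
          moreover have "(1-u) * (a \<bullet> y) \<le> (1-u) * b" using yle u' by (intro mult_left_mono) auto
          ultimately show ?thesis by (simp add: algebra_simps)
        next
          case False2: False
          then have "a \<bullet> y < b" using False xle yle by auto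
          then have "(1-u) * (a \<bullet> y) < (1-u) * b" using u' by simp
          moreover have "u * (a \<bullet> x) \<le> u * b" using xle u' by (intro mult_left_mono) auto
          ultimately show ?thesis by (simp add: algebra_simps)
        qed
        then show ?thesis using dn comb by simp
      qed
    qed
  qed
  moreover have "convex (hypo_on UNIV h)"
  proof (rule convex_hypoI)
    fix x y s t and u :: real
    assume u: "0 \<le> u" "u \<le> 1" "ereal s \<le> h x" "ereal t \<le> h y"
    have xle: "a \<bullet> x \<ge> b" using dn u(3) by (metis not_le ereal_infty_less_eq2(2) MInfty_neq_ereal(1) MInfty_eq_minfinity)
    have yle: "a \<bullet> y \<ge> b" using dn u(4) by (metis not_le ereal_infty_less_eq2(2) MInfty_neq_ereal(1) MInfty_eq_minfinity)
    show "ereal (u * s + (1 - u) * t) \<le> h (u *\<^sub>R x + (1-u) *\<^sub>R y)"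
    proof (cases "u = 0 \<or> u = 1")
      case True then show ?thesis using u by auto
    next
      case False
      then have u': "0 < u" "u < 1" using u by auto
      show ?thesis
      proof (cases "a \<bullet> x = b \<and> a \<bullet> y = b")
        case True
        then have "(x,s) \<in> hypo_on {x. a \<bullet> x = b} h" "(y,t) \<in> hypo_on {x. a \<bullet> x = b} h"
          using u by (auto simp: hypo_on_def)
        from convexD[OF HH this, of u "1-u"] u show ?thesis by (simp add: hypo_on_def)
      next
        case False
        have "u * (a \<bullet> x) + (1-u) * (a \<bullet> y) > b"
        proof (cases "a \<bullet> x > b")
          case True
          have "u * (a \<bullet> x) > u * b" using True u' by simp
          moreover have "(1-u) * (a \<bullet> y) \<ge> (1-u) * b" using yle u' by (intro mult_left_mono) auto
          ultimately show ?thesis by (simp add: algebra_simps)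
        next
          case False2: False
          then have "a \<bullet> y > b" using False xle yle by auto
          then have "(1-u) * (a \<bullet> y) > (1-u) * b" using u' by simp
          moreover have "u * (a \<bullet> x) \<ge> u * b" using xle u' by (intro mult_left_mono) auto
          ultimately show ?thesis by (simp add: algebra_simps)
        qed
        then show ?thesis using up comb by simp
      qed
    qed
  qed
  ultimately show ?thesis by (simp add: gen_affine_on_def)
qed

theorem theorem1:
  fixes h :: "'a::euclidean_space \<Rightarrow> ereal"
  shows "gen_affine_on UNIV h \<longleftrightarrow>
    ((\<forall>x. h x = \<infinity>) \<or>
     (\<forall>x. h x = -\<infinity>) \<or>
     (\<exists>f. affine_fun f \<and> (\<forall>x. h x = ereal (f x))) \<or>
     (\<exists>a b. a \<noteq> 0 \<and>
        (\<forall>x. a \<bullet> x > b \<longrightarrow> h x = \<infinity>) \<and>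
        (\<forall>x. a \<bullet> x < b \<longrightarrow> h x = -\<infinity>) \<and>
        gen_affine_on {x. a \<bullet> x = b} h))"
  using forward backward by blast

end
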